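(* Let $n\geq 3$, $d\geq 2$, $\ell\in\mathbb{R}_{>0}^n$, let $f_d:\mathbb{R}^d\to\mathbb{R}^{d+1}$ be a linear Euclidean isometry with induced map $F_d:V_d(\ell)\to V_{d+1}(\ell)$, and let $P\in V_d(\ell)$. Then the preimage under $F_d$ of the $SO(d+1)$-orbit of $F_d(P)$ is the $O(d)$-orbit of $P$: \[F_d^{-1}\big(SO(d+1)(F_d(P))\big)=O(d)(P).\]
   Context: $V_d(\ell)=\{(\mathbf{v}_1,\ldots,\mathbf{v}_{n-1})\in(\mathbb{R}^d)^{n-1} : \|\mathbf{v}_i-\mathbf{v}_{i-1}\|=l_i,\ i=1,\ldots,n\}$ with $\mathbf{v}_0=\mathbf{v}_n=\mathbf{0}$. A group $G$ of linear maps acts on polygons diagonally, $T(\mathbf{v}_1,\ldots,\mathbf{v}_{n-1})=(T(\mathbf{v}_1),\ldots,T(\mathbf{v}_{n-1}))$, and $G(P)=\{T(P):T\in G\}$ is the orbit. $F_d(\mathbf{v}_1,\ldots,\mathbf{v}_{n-1})=(f_d(\mathbf{v}_1),\ldots,f_d(\mathbf{v}_{n-1}))$. *)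

theory Defs
  imports "HOL-Analysis.Analysis"
begin

text \<open>A closed polygon with side lengths l 1, ..., l n in R^d is represented as a
function v :: nat => real^'d with v 0 = 0, v n = 0 (the vertices v 1 .. v (n-1) are
the data), normalised to 0 at indices beyond n so that polygons are equal iff
their vertex tuples are equal.\<close>
definition polygon_space :: "nat \<Rightarrow> (nat \<Rightarrow> real) \<Rightarrow> (nat \<Rightarrow> real^'d) set" where
  "polygon_space n l = {v. v 0 = 0 \<and> v n = 0 \<and> (\<forall>i>n. v i = 0) \<and>
      (\<forall>i\<in>{1..n}. norm (v i - v (i - 1)) = l i)}"

definition act :: "(real^'a \<Rightarrow> real^'b) \<Rightarrow> (nat \<Rightarrow> real^'a) \<Rightarrow> (nat \<Rightarrow> real^'b)" where
  "act T v = (\<lambda>i. T (v i))"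

definition orbit :: "(real^'a \<Rightarrow> real^'a) set \<Rightarrow> (nat \<Rightarrow> real^'a) \<Rightarrow> (nat \<Rightarrow> real^'a) set" where
  "orbit G P = {act T P | T. T \<in> G}"

definition O_group :: "(real^'a \<Rightarrow> real^'a) set" where
  "O_group = {T. orthogonal_transformation T}"

definition SO_group :: "(real^'a \<Rightarrow> real^'a) set" where
  "SO_group = {T. orthogonal_transformation T \<and> det (matrix T) = 1}"

end

theory Submission
  imports Defs
begin

lemma gram_linear:
  fixes x :: "'i \<Rightarrow> 'a::euclidean_space" and y :: "'i \<Rightarrow> 'b::euclidean_space"
  assumes G: "\<And>i j. x i \<bullet> x j = y i \<bullet> y j"
  obtains g where "linear g" "\<And>i. g (x i) = y i" "\<And>v. v \<in> span (range x) \<Longrightarrow> norm (g v) = norm v"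
proof -
  obtain B where B: "B \<subseteq> range x" "independent B" "range x \<subseteq> span B"
    using maximal_independent_subset by blast
  have yeq: "y i = y j" if "x i = x j" for i j
  proof -
    have "(y i - y j) \<bullet> (y i - y j) = (x i - x j) \<bullet> (x i - x j)"
      by (simp add: inner_diff G inner_commute)
    then show ?thesis using that by simp
  qed
  define \<phi> where "\<phi> v = y (inv x v)" for v
  have phi: "\<phi> (x i) = y i" for i
    unfolding \<phi>_def by (rule yeq) (meson f_inv_into_f rangeI)
  obtain g where g: "linear g" "\<And>b. b \<in> B \<Longrightarrow> g b = \<phi> b"
    using linear_independent_extend[OF B(2)] by blast
  interpret g: linear g by fact
  have c1: "g v \<bullet> y j = v \<bullet> x j" if "v \<in> span B" for v j
  proof (rule span_induct[OF that])
    fix b assume "b \<in> B"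
    then obtain i where "b = x i" using B by auto
    then show "g b \<bullet> y j = b \<bullet> x j" using g phi G \<open>b \<in> B\<close> by simp
  next
    show "subspace {v. g v \<bullet> y j = v \<bullet> x j}"
      unfolding subspace_def by (simp add: g.add g.scale g.zero inner_add_left)
  qed
  have c3: "g v \<bullet> g w = v \<bullet> w" if "v \<in> span B" "w \<in> span B" for v w
  proof (rule span_induct[OF that(2)])
    fix b assume "b \<in> B"
    then obtain i where "b = x i" using B by auto
    then show "g v \<bullet> g b = v \<bullet> b" using g phi c1[OF that(1)] \<open>b \<in> B\<close> by simp
  next
    show "subspace {w. g v \<bullet> g w = v \<bullet> w}"
      unfolding subspace_def by (simp add: g.add g.scale g.zero inner_add_right)
  qed
  have xs: "x j \<in> span B" for j using B by auto
  have c2: "g (x j) = y j" for j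
  proof -
    have "(g (x j) - y j) \<bullet> (g (x j) - y j) = 0"
      using c3[OF xs xs] c1[OF xs, of j] G[of j j]
      by (simp add: inner_diff inner_commute)
    then show ?thesis by simp
  qed
  have sp: "span (range x) = span B"
    using B by (metis span_mono span_span subset_antisym)
  show ?thesis
  proof (rule that[OF g(1) c2])
    fix v assume "v \<in> span (range x)"
    then have "g v \<bullet> g v = v \<bullet> v" using c3 sp by simp
    then show "norm (g v) = norm v" by (simp add: norm_eq)
  qed
qed

lemma extend_isometry:
  fixes g :: "'a::euclidean_space \<Rightarrow> 'a"
  assumes lg: "linear g" and sA: "subspace A" and gn: "\<And>v. v \<in> A \<Longrightarrow> norm (g v) = norm v"
  obtains T where "orthogonal_transformation T" "\<And>v. v \<in> A \<Longrightarrow> T v = g v"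
proof -
  interpret g: linear g by fact
  have spA: "span A = A" using sA by (simp add: span_eq_iff)
  have ginj: "inj_on g (span A)"
  proof (rule inj_onI)
    fix v w assume "v \<in> span A" "w \<in> span A" "g v = g w"
    then have "v - w \<in> A" "g (v - w) = 0" using sA spA by (auto simp: g.diff subspace_diff)
    then show "v = w" using gn by fastforce
  qed
  define A' where "A' = g ` A"
  have sA': "subspace A'" unfolding A'_def using sA lg by (simp add: linear_subspace_image)
  have dA: "dim A' = dim A" unfolding A'_def using dim_image_eq[OF lg ginj] .
  define C where "C = {y. \<forall>x\<in>A. orthogonal x y}"
  define C' where "C' = {y. \<forall>x\<in>A'. orthogonal x y}"
  have sC: "subspace C" "subspace C'" unfolding C_def C'_def by (simp_all add: subspace_orthogonal_to_vectors)
  have "dim C + dim A = dim (UNIV::'a set)"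
  proof -
    have "{y \<in> UNIV. \<forall>x\<in>A. orthogonal x y} = C" by (auto simp: C_def)
    then show ?thesis using dim_subspace_orthogonal_to_vectors[OF sA subspace_UNIV] by simp
  qed
  moreover have "dim C' + dim A' = dim (UNIV::'a set)"
  proof -
    have "{y \<in> UNIV. \<forall>x\<in>A'. orthogonal x y} = C'" by (auto simp: C'_def)
    then show ?thesis using dim_subspace_orthogonal_to_vectors[OF sA' subspace_UNIV] by simp
  qed
  ultimately have dC: "dim C = dim C'" using dA by simp
  obtain h where lh: "linear h" and hC: "h ` C = C'" and hn: "\<And>x. x \<in> C \<Longrightarrow> norm (h x) = norm x"
    using isometry_subspaces[OF sC dC] by blast
  obtain B1 where B1: "B1 \<subseteq> A" "pairwise orthogonal B1" "\<And>x. x \<in> B1 \<Longrightarrow> norm x = 1" "span B1 = A"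
    using orthonormal_basis_subspace[OF sA] by metis
  obtain B2 where B2: "B2 \<subseteq> C" "pairwise orthogonal B2" "\<And>x. x \<in> B2 \<Longrightarrow> norm x = 1" "span B2 = C"
    using orthonormal_basis_subspace[OF sC(1)] by metis
  have po: "pairwise orthogonal (B1 \<union> B2)"
    unfolding pairwise_def
  proof (intro ballI impI)
    fix u v assume uv: "u \<in> B1 \<union> B2" "v \<in> B1 \<union> B2" "u \<noteq> v"
    show "orthogonal u v"
    proof (cases "u \<in> B1")
      case True
      show ?thesis
      proof (cases "v \<in> B1")
        case True
        then show ?thesis using B1(2) \<open>u \<in> B1\<close> uv(3) unfolding pairwise_def by blast
      next
        case False
        then have "v \<in> C" using uv B2 by blast
        then show ?thesis using True B1(1) unfolding C_def by blast
      qed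
    next
      case False
      then have uC: "u \<in> C" "u \<in> B2" using uv B2 by auto
      show ?thesis
      proof (cases "v \<in> B1")
        case True
        then show ?thesis using uC B1(1) orthogonal_commute unfolding C_def by blast
      next
        case False
        then show ?thesis using B2(2) uC uv unfolding pairwise_def by blast
      qed
    qed
  qed
  have "0 \<notin> B1 \<union> B2" using B1(3) B2(3) by (metis Un_iff norm_zero zero_neq_one)
  then have ind: "independent (B1 \<union> B2)" using po pairwise_orthogonal_independent by blast
  define f0 where "f0 b = (if b \<in> B1 then g b else h b)" for b
  obtain T where lT: "linear T" and Tf: "\<And>b. b \<in> B1 \<union> B2 \<Longrightarrow> T b = f0 b"
    using linear_independent_extend[OF ind, of f0] by blast
  have TA: "T v = g v" if "v \<in> A" for v
  proof (rule linear_eq_on_span[OF lT lg])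
    show "v \<in> span B1" using that B1(4) by simp
    fix b assume "b \<in> B1" then show "T b = g b" using Tf f0_def by simp
  qed
  have disj: "b \<notin> B1" if "b \<in> B2" for b
  proof
    assume "b \<in> B1"
    then have "b \<in> A" "b \<in> C" using B1 B2 that by auto
    then have "orthogonal b b" unfolding C_def by auto
    then show False using B2(3)[OF that] by (simp add: orthogonal_self)
  qed
  have TC: "T v = h v" if "v \<in> C" for v
  proof (rule linear_eq_on_span[OF lT lh])
    show "v \<in> span B2" using that B2(4) by simp
    fix b assume "b \<in> B2" then show "T b = h b" using Tf f0_def disj by simp
  qed
  have "norm (T x) = norm x" for x
  proof -
    obtain y z where yz: "y \<in> span A" "\<And>w. w \<in> span A \<Longrightarrow> orthogonal z w" "x = y + z"
      using orthogonal_subspace_decomp_exists[of A x] by metis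
    have yA: "y \<in> A" using yz(1) spA by simp
    have zC: "z \<in> C" unfolding C_def using yz(2) spA orthogonal_commute by auto
    have "T x = g y + h z" using yz(3) TA[OF yA] TC[OF zC] lT by (simp add: linear_add[OF lT])
    moreover have "h z \<in> C'" using hC zC by blast
    then have "orthogonal (g y) (h z)" unfolding C'_def A'_def using yA by blast
    moreover have "orthogonal y z" using yz(2)[OF yz(1)] orthogonal_commute by blast
    ultimately have "(norm (T x))\<^sup>2 = (norm x)\<^sup>2"
      using norm_add_Pythagorean[of "g y" "h z"] norm_add_Pythagorean[of y z] gn[OF yA] hn[OF zC] yz(3)
      by simp
    then show ?thesis by simp
  qed
  then have "orthogonal_transformation T" using lT by (simp add: orthogonal_transformation)
  then show ?thesis using that TA by blast
qed

lemma gram_orthogonal: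
  fixes x y :: "'i \<Rightarrow> 'a::euclidean_space"
  assumes G: "\<And>i j. x i \<bullet> x j = y i \<bullet> y j"
  obtains T where "orthogonal_transformation T" "\<And>i. T (x i) = y i"
proof -
  obtain g where g: "linear g" "\<And>i. g (x i) = y i" "\<And>v. v \<in> span (range x) \<Longrightarrow> norm (g v) = norm v"
    using gram_linear[of x y, OF G] by blast
  obtain T where T: "orthogonal_transformation T" "\<And>v. v \<in> span (range x) \<Longrightarrow> T v = g v"
    using extend_isometry[OF g(1) subspace_span, of "range x", OF g(3)] by blast
  have "T (x i) = y i" for i
  proof -
    have "x i \<in> span (range x)" by (rule span_base) simp
    then show ?thesis using T(2) g(2) by simp
  qed
  then show ?thesis by (rule that[OF T(1)])
qed

lemma reflection_exists:
  fixes u :: "real^'n" assumes u1: "norm u = 1"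
  obtains R where "orthogonal_transformation R" "det (matrix R) = -1" "\<And>w. orthogonal u w \<Longrightarrow> R w = w"
proof -
  obtain k :: 'n where True by simp
  have "norm (axis k (1::real)) = norm u" using u1 by simp
  then obtain U :: "real^'n \<Rightarrow> real^'n" where U: "orthogonal_transformation U" "U (axis k 1) = u"
    using orthogonal_transformation_exists by metis
  define Ui where "Ui = inv U"
  have Ui: "orthogonal_transformation Ui" unfolding Ui_def using U(1) by (rule orthogonal_transformation_inv)
  have bO: "bij U" using U(1) by (rule orthogonal_transformation_bij)
  have UUi: "U (Ui x) = x" for x unfolding Ui_def using bO by (simp add: bij_is_surj surj_f_inv_f)
  define c :: "'n \<Rightarrow> real" where "c i = (if i = k then -1 else 1)" for i
  define D :: "real^'n^'n" where "D = (\<chi> i j. if j = i then c i else 0)"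
  define Rk where "Rk x = (\<chi> i. if i = k then - (x$i) else x$i)" for x :: "real^'n"
  have RkD: "Rk = (\<lambda>x. D *v x)"
  proof (rule ext)
    fix x :: "real^'n"
    have "(\<Sum>j\<in>UNIV. (if j = i then c i else 0) * x$j) = c i * x$i" for i
    proof -
      have "(\<Sum>j\<in>UNIV. (if j = i then c i else 0) * x$j) = (\<Sum>j\<in>UNIV. if j = i then c i * x$j else 0)"
        by (intro sum.cong) auto
      then show ?thesis by simp
    qed
    then show "Rk x = D *v x"
      by (simp add: Rk_def D_def vec_eq_iff matrix_vector_mult_def c_def)
  qed
  have lRk: "linear Rk" unfolding RkD by (rule matrix_vector_mul_linear)
  have nRk: "norm (Rk x) = norm x" for x
  proof -
    have "Rk x \<bullet> Rk x = x \<bullet> x"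
      unfolding Rk_def inner_vec_def by (intro sum.cong) auto
    then show ?thesis by (simp add: norm_eq)
  qed
  have oRk: "orthogonal_transformation Rk" using lRk nRk by (simp add: orthogonal_transformation)
  have dD: "det D = -1"
  proof -
    have "det D = prod (\<lambda>i. D$i$i) UNIV" by (rule det_diagonal) (simp add: D_def)
    also have "\<dots> = prod (\<lambda>i. if i = k then -1 else 1) UNIV" by (simp add: D_def c_def)
    also have "\<dots> = -1" by (simp add: prod.delta)
    finally show ?thesis .
  qed
  define R where "R = U \<circ> Rk \<circ> Ui"
  have lU: "linear U" "linear Ui" using U(1) Ui by (simp_all add: orthogonal_transformation_linear)
  have oR: "orthogonal_transformation R" unfolding R_def
    using U(1) oRk Ui by (simp add: orthogonal_transformation_compose)
  have "matrix R = matrix U ** (matrix Rk ** matrix Ui)"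
    unfolding R_def o_assoc[symmetric]
    by (simp add: matrix_compose lU lRk linear_compose)
  then have e1: "det (matrix R) = det D * (det (matrix U) * det (matrix Ui))"
    by (simp add: det_mul RkD)
  have e2: "det (matrix U) * det (matrix Ui) = det (matrix (U \<circ> Ui))"
    by (simp add: matrix_compose lU det_mul)
  have e3: "U \<circ> Ui = id" by (rule ext) (simp add: UUi)
  have dR: "det (matrix R) = -1" using e1 e2 e3 by (simp add: dD matrix_id_mat_1 det_I)
  have fixR: "R w = w" if "orthogonal u w" for w
  proof -
    have "Ui w \<bullet> axis k 1 = U (Ui w) \<bullet> U (axis k 1)"
      using U(1) by (simp add: orthogonal_transformation_def)
    also have "\<dots> = 0" using that by (simp add: UUi U(2) orthogonal_def inner_commute)
    finally have "(Ui w)$k = 0" by (simp add: inner_axis)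
    then have "Rk (Ui w) = Ui w" by (simp add: Rk_def vec_eq_iff)
    then show ?thesis by (simp add: R_def UUi)
  qed
  show ?thesis using that oR dR fixR by blast
qed

lemma lin_isom_inner:
  fixes f :: "'a::real_inner \<Rightarrow> 'b::real_inner"
  assumes "linear f" "\<And>x. norm (f x) = norm x"
  shows "f v \<bullet> f w = v \<bullet> w"
proof -
  have sq: "f x \<bullet> f x = x \<bullet> x" for x using assms(2)[of x] by (simp add: norm_eq)
  have "f (v + w) \<bullet> f (v + w) = (v+w) \<bullet> (v+w)" by (rule sq)
  then have "f v \<bullet> f v + 2 * (f v \<bullet> f w) + f w \<bullet> f w = v \<bullet> v + 2 * (v \<bullet> w) + w \<bullet> w"
    using linear_add[OF assms(1)] by (simp add: inner_add inner_commute)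
  then show ?thesis using sq[of v] sq[of w] by linarith
qed

theorem proposition4p4:
  fixes n :: nat and l :: "nat \<Rightarrow> real"
    and f :: "real^'d \<Rightarrow> real^'e"
    and P :: "nat \<Rightarrow> real^'d"
  assumes "n \<ge> 3"
    and "CARD('d) \<ge> 2"
    and "CARD('e) = CARD('d) + 1"
    and "\<forall>i\<in>{1..n}. l i > 0"
    and "linear f" and "\<forall>x. norm (f x) = norm x"
    and "P \<in> polygon_space n l"
  shows "{Q \<in> polygon_space n l. act f Q \<in> orbit SO_group (act f P)} = orbit O_group P"
proof -
  have lf: "linear f" and nf: "\<And>x. norm (f x) = norm x" using assms by auto
  have fi: "f v \<bullet> f w = v \<bullet> w" for v w by (rule lin_isom_inner[OF lf nf])
  have oi: "T v \<bullet> T w = v \<bullet> w" if "orthogonal_transformation T" for T :: "real^'a \<Rightarrow> real^'a" and v w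
    using that by (simp add: orthogonal_transformation_def)
  show ?thesis
  proof (rule set_eqI, rule iffI)
    fix Q assume "Q \<in> {Q \<in> polygon_space n l. act f Q \<in> orbit SO_group (act f P)}"
    then obtain S where S: "orthogonal_transformation S" "act f Q = act S (act f P)"
      unfolding orbit_def SO_group_def by auto
    have fQ: "f (Q i) = S (f (P i))" for i using fun_cong[OF S(2), of i] by (simp add: act_def)
    have G: "P i \<bullet> P j = Q i \<bullet> Q j" for i j
    proof -
      have "P i \<bullet> P j = S (f (P i)) \<bullet> S (f (P j))" by (simp add: oi[OF S(1)] fi)
      also have "\<dots> = Q i \<bullet> Q j" by (simp add: fQ[symmetric] fi)
      finally show ?thesis .
    qed
    obtain T where T: "orthogonal_transformation T" "\<And>i. T (P i) = Q i"
      using gram_orthogonal[of P Q, OF G] by blast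
    have "Q = act T P" by (rule ext) (simp add: act_def T(2))
    then show "Q \<in> orbit O_group P" unfolding orbit_def O_group_def using T(1) by blast
  next
    fix Q assume "Q \<in> orbit O_group P"
    then obtain T where T: "orthogonal_transformation T" and QT: "Q = act T P"
      unfolding orbit_def O_group_def by auto
    have lT: "linear T" using T by (rule orthogonal_transformation_linear)
    have Pp: "P 0 = 0" "P n = 0" "\<And>i. i > n \<Longrightarrow> P i = 0" "\<And>i. i \<in> {1..n} \<Longrightarrow> norm (P i - P (i - 1)) = l i"
      using assms(7) unfolding polygon_space_def by auto
    have "Q \<in> polygon_space n l"
      unfolding polygon_space_def QT act_def
      using Pp linear_0[OF lT] linear_diff[OF lT, symmetric] orthogonal_transformation_norm[OF T]
      by auto
    moreover have "act f Q \<in> orbit SO_group (act f P)"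
    proof -
      have G: "f (P i) \<bullet> f (P j) = f (T (P i)) \<bullet> f (T (P j))" for i j
        by (simp add: fi oi[OF T])
      obtain S0 where S0: "orthogonal_transformation S0" "\<And>i. S0 (f (P i)) = f (T (P i))"
        using gram_orthogonal[of "\<lambda>i. f (P i)" "\<lambda>i. f (T (P i))", OF G] by blast
      have goal: "act f Q \<in> orbit SO_group (act f P)"
        if "orthogonal_transformation S" "det (matrix S) = 1" "\<And>i. S (f (P i)) = f (T (P i))" for S
      proof -
        have "act f Q = act S (act f P)" by (rule ext) (simp add: act_def QT that(3))
        then show ?thesis unfolding orbit_def SO_group_def using that(1,2) by blast
      qed
      have "\<bar>det (matrix S0)\<bar> = 1" using S0(1) by simp
      then consider "det (matrix S0) = 1" | "det (matrix S0) = -1" by linarith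
      then show ?thesis
      proof cases
        case 1
        then show ?thesis using goal S0 by blast
      next
        case 2
        have "dim (range f) \<le> dim (UNIV :: (real^'d) set)" by (rule dim_image_le[OF lf])
        then have "dim (range f) < DIM(real^'e)" using assms(3) by simp
        then obtain u0 where u0: "u0 \<noteq> 0" "\<And>y. y \<in> span (range f) \<Longrightarrow> orthogonal u0 y"
          using orthogonal_to_subspace_exists by blast
        define u where "u = u0 /\<^sub>R norm u0"
        have u1: "norm u = 1" using u0(1) by (simp add: u_def)
        have uo: "orthogonal u (f z)" for z
          using u0(2)[of "f z"] unfolding u_def by (simp add: span_base orthogonal_clauses)
        obtain R where R: "orthogonal_transformation R" "det (matrix R) = -1" "\<And>w. orthogonal u w \<Longrightarrow> R w = w"
          using reflection_exists[OF u1] by blast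
        have lR: "linear R" "linear S0" using R(1) S0(1) by (simp_all add: orthogonal_transformation_linear)
        show ?thesis
        proof (rule goal[of "R \<circ> S0"])
          show "orthogonal_transformation (R \<circ> S0)" using R(1) S0(1) by (rule orthogonal_transformation_compose)
          show "det (matrix (R \<circ> S0)) = 1" using R(2) 2 by (simp add: matrix_compose lR det_mul)
          show "(R \<circ> S0) (f (P i)) = f (T (P i))" for i using S0(2) R(3) uo by simp
        qed
      qed
    qed
    ultimately show "Q \<in> {Q \<in> polygon_space n l. act f Q \<in> orbit SO_group (act f P)}" by blast
  qed
qed

end
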